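(* If $\lambda_1<a$, $1<q<p$ and $b>0$, then for any fixed $\Lambda>0$ there exists $t_0=t_0(\Lambda)>0$ such that $I^+_{\lambda,s}(t\varphi_1)<0$ for all $t\ge t_0$ and all $0<\lambda<\Lambda$.
   Context: $\Omega\subset\mathbb{R}^N$ bounded smooth domain, $s\in(0,1)$, $p>1$, $N>sp$, $p_s^*=\frac{Np}{N-sp}$. $X_p^s=\{u\in W^{s,p}(\mathbb{R}^N): u=0 \text{ a.e. in } \mathbb{R}^N\setminus\Omega\}$ with norm $\|u\|_{X_p^s}=\big(\int_{\mathbb{R}^{2N}}\frac{|u(x)-u(y)|^p}{|x-y|^{N+sp}}dxdy\big)^{1/p}$. $\lambda_1=\inf\{\|u\|_{X_p^s}^p:u\in X_p^s,\|u\|_{L^p(\Omega)}=1\}$ is the first eigenvalue of the fractional $p$-Laplacian $(-\Delta)^s_p$ on $X_p^s$, and $\varphi_1$ the associated positive, $L^p$-normalized eigenfunction. $I^+_{\lambda,s}(u)=\frac1p\|u\|_{X_p^s}^p+\frac\lambda q\int_\Omega|u^+|^q-\frac ap\int_\Omega|u^+|^p-\frac{b}{p_s^*}\int_\Omega(u^+)^{p_s^*}$, $u^+=\max\{u,0\}$. *)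

theory Defs
  imports "HOL-Analysis.Analysis"
begin

text \<open>Points of R^N are vectors of type real^'n, N = CARD('n).\<close>

definition crit_exp :: "real \<Rightarrow> real \<Rightarrow> real \<Rightarrow> real" where
  "crit_exp N s p = N * p / (N - s * p)"

definition gagliardo :: "real \<Rightarrow> real \<Rightarrow> (real^'n \<Rightarrow> real) \<Rightarrow> ennreal" where
  "gagliardo s p u =
     (\<integral>\<^sup>+ z. ennreal (\<bar>u (fst z) - u (snd z)\<bar> powr p
                 / norm (fst z - snd z) powr (real CARD('n) + s * p)) \<partial>(lborel \<Otimes>\<^sub>M lborel))"

definition Xsp :: "real \<Rightarrow> real \<Rightarrow> (real^'n) set \<Rightarrow> (real^'n \<Rightarrow> real) set" where
  "Xsp s p \<Omega> = {u. u \<in> borel_measurable lborel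
      \<and> (\<integral>\<^sup>+ x. ennreal (\<bar>u x\<bar> powr p) \<partial>lborel) < \<infinity>
      \<and> gagliardo s p u < \<infinity>
      \<and> (AE x in lborel. x \<notin> \<Omega> \<longrightarrow> u x = 0)}"

definition Xnorm_pow :: "real \<Rightarrow> real \<Rightarrow> (real^'n \<Rightarrow> real) \<Rightarrow> real" where
  "Xnorm_pow s p u = enn2real (gagliardo s p u)"

definition Lint_pow :: "real \<Rightarrow> (real^'n) set \<Rightarrow> (real^'n \<Rightarrow> real) \<Rightarrow> real" where
  "Lint_pow r \<Omega> u = (LINT x:\<Omega>|lborel. \<bar>u x\<bar> powr r)"

definition lambda1 :: "real \<Rightarrow> real \<Rightarrow> (real^'n) set \<Rightarrow> real" where
  "lambda1 s p \<Omega> = Inf {Xnorm_pow s p u | u. u \<in> Xsp s p \<Omega> \<and> Lint_pow p \<Omega> u = 1}"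

definition frac_eigenfunction ::
  "real \<Rightarrow> real \<Rightarrow> (real^'n) set \<Rightarrow> real \<Rightarrow> (real^'n \<Rightarrow> real) \<Rightarrow> bool" where
  "frac_eigenfunction s p \<Omega> \<mu> \<phi> \<longleftrightarrow> \<phi> \<in> Xsp s p \<Omega> \<and> (\<exists>x. \<phi> x \<noteq> 0) \<and>
     (\<forall>v \<in> Xsp s p \<Omega>.
        (\<integral> z. \<bar>\<phi> (fst z) - \<phi> (snd z)\<bar> powr (p - 2) * (\<phi> (fst z) - \<phi> (snd z))
              * (v (fst z) - v (snd z)) / norm (fst z - snd z) powr (real CARD('n) + s * p)
           \<partial>(lborel \<Otimes>\<^sub>M lborel))
        = \<mu> * (LINT x:\<Omega>|lborel. \<bar>\<phi> x\<bar> powr (p - 2) * \<phi> x * v x))"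

definition I_plus :: "real \<Rightarrow> real \<Rightarrow> real \<Rightarrow> real \<Rightarrow> real \<Rightarrow> real \<Rightarrow> (real^'n) set
    \<Rightarrow> (real^'n \<Rightarrow> real) \<Rightarrow> real" where
  "I_plus s p q a b lam \<Omega> u =
     Xnorm_pow s p u / p
     + lam / q * (LINT x:\<Omega>|lborel. \<bar>max (u x) 0\<bar> powr q)
     - a / p * (LINT x:\<Omega>|lborel. \<bar>max (u x) 0\<bar> powr p)
     - b / crit_exp (real CARD('n)) s p
         * (LINT x:\<Omega>|lborel. max (u x) 0 powr crit_exp (real CARD('n)) s p)"

end

theory Submission
  imports Defs
begin

lemma gm: fixes u :: "real^'n \<Rightarrow> real"
  assumes "u \<in> borel_measurable lborel"
  shows "(\<lambda>z. \<bar>u (fst z) - u (snd z)\<bar> powr p / norm (fst z - snd z) powr c) \<in> borel_measurable (lborel \<Otimes>\<^sub>M lborel)"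
  using assms by measurable

lemma powr_sq: fixes d p :: real shows "\<bar>d\<bar> powr (p - 2) * d * d = \<bar>d\<bar> powr p"
proof (cases "d = 0")
  case False
  have "\<bar>d\<bar> powr (p - 2) * d * d = \<bar>d\<bar> powr (p - 2) * \<bar>d\<bar> powr 2"
  proof -
    have "\<bar>d\<bar> powr 2 = \<bar>d\<bar> ^ 2" using False by (simp add: powr_numeral)
    thus ?thesis by (simp add: power2_eq_square abs_mult_self_eq mult.assoc)
  qed
  also have "\<dots> = \<bar>d\<bar> powr (p - 2 + 2)" by (rule powr_add[symmetric])
  finally show ?thesis by simp
qed simp

lemma gag_scale: fixes u :: "real^'n \<Rightarrow> real"
  assumes "u \<in> borel_measurable lborel" "t > 0" "p > 0"
  shows "Xnorm_pow s p (\<lambda>x. t * u x) = t powr p * Xnorm_pow s p u"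
proof -
  have "gagliardo s p (\<lambda>x. t * u x) = (\<integral>\<^sup>+ z. ennreal (t powr p) * ennreal (\<bar>u (fst z) - u (snd z)\<bar> powr p
                 / norm (fst z - snd z) powr (real CARD('n) + s * p)) \<partial>(lborel \<Otimes>\<^sub>M lborel))"
    unfolding gagliardo_def
  proof (rule nn_integral_cong)
    fix z :: "(real^'n) \<times> (real^'n)"
    have "\<bar>t * u (fst z) - t * u (snd z)\<bar> powr p = t powr p * \<bar>u (fst z) - u (snd z)\<bar> powr p"
      using assms by (simp add: right_diff_distrib[symmetric] abs_mult powr_mult)
    thus "ennreal (\<bar>t * u (fst z) - t * u (snd z)\<bar> powr p / norm (fst z - snd z) powr (real CARD('n) + s * p)) =
         ennreal (t powr p) * ennreal (\<bar>u (fst z) - u (snd z)\<bar> powr p / norm (fst z - snd z) powr (real CARD('n) + s * p))"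
      by (simp add: ennreal_mult[symmetric])
  qed
  also have "\<dots> = ennreal (t powr p) * gagliardo s p u"
    unfolding gagliardo_def
    by (rule nn_integral_cmult) (use gm[OF assms(1)] in measurable)
  finally show ?thesis unfolding Xnorm_pow_def by (simp add: enn2real_mult)
qed

lemma set_scale: fixes u :: "real^'n \<Rightarrow> real"
  assumes "t > 0"
  shows "(LINT x:\<Omega>|lborel. \<bar>max (t * u x) 0\<bar> powr r) = t powr r * (LINT x:\<Omega>|lborel. \<bar>max (u x) 0\<bar> powr r)"
proof -
  have "\<And>x. \<bar>max (t * u x) 0\<bar> powr r = t powr r * \<bar>max (u x) 0\<bar> powr r"
  proof -
    fix x
    have "max (t * u x) 0 = t * max (u x) 0" using assms by (simp add: max_def mult_le_0_iff)
    thus "\<bar>max (t * u x) 0\<bar> powr r = t powr r * \<bar>max (u x) 0\<bar> powr r"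
      using assms by (simp add: abs_mult powr_mult)
  qed
  thus ?thesis by simp
qed

theorem lemma4p5:
  fixes \<Omega> :: "(real^'n) set" and s p q a b \<Lambda> :: real and \<phi>1 :: "real^'n \<Rightarrow> real"
  assumes "open \<Omega>" "bounded \<Omega>" "connected \<Omega>" "\<Omega> \<noteq> {}"
    and "0 < s" "s < 1" "1 < p" "real CARD('n) > s * p"
    and "frac_eigenfunction s p \<Omega> (lambda1 s p \<Omega>) \<phi>1"
    and "AE x in lborel. x \<in> \<Omega> \<longrightarrow> \<phi>1 x > 0"
    and "Lint_pow p \<Omega> \<phi>1 = 1"
    and "lambda1 s p \<Omega> < a" "1 < q" "q < p" "0 < b"
    and "0 < \<Lambda>"
  shows "\<exists>t0 > 0. \<forall>t \<ge> t0. \<forall>lam. 0 < lam \<and> lam < \<Lambda> \<longrightarrow>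
           I_plus s p q a b lam \<Omega> (\<lambda>x. t * \<phi>1 x) < 0"
proof -
  define l1 where "l1 = lambda1 s p \<Omega>"
  define N where "N = real CARD('n)"
  have X: "\<phi>1 \<in> Xsp s p \<Omega>" using assms(9) unfolding frac_eigenfunction_def by blast
  have meas: "\<phi>1 \<in> borel_measurable lborel" using X unfolding Xsp_def by blast
  have eig: "(\<integral> z. \<bar>\<phi>1 (fst z) - \<phi>1 (snd z)\<bar> powr (p - 2) * (\<phi>1 (fst z) - \<phi>1 (snd z))
              * (\<phi>1 (fst z) - \<phi>1 (snd z)) / norm (fst z - snd z) powr (real CARD('n) + s * p)
           \<partial>(lborel \<Otimes>\<^sub>M lborel))
        = l1 * (LINT x:\<Omega>|lborel. \<bar>\<phi>1 x\<bar> powr (p - 2) * \<phi>1 x * \<phi>1 x)"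
    using assms(9) X unfolding frac_eigenfunction_def l1_def by blast
  have X0: "Xnorm_pow s p \<phi>1 = l1"
  proof -
    have "Xnorm_pow s p \<phi>1 = (\<integral> z. \<bar>\<phi>1 (fst z) - \<phi>1 (snd z)\<bar> powr p / norm (fst z - snd z) powr (real CARD('n) + s * p)
           \<partial>(lborel \<Otimes>\<^sub>M lborel))"
      unfolding Xnorm_pow_def gagliardo_def
      by (rule integral_eq_nn_integral[symmetric]) (use gm[OF meas] in auto)
    also have "\<dots> = l1 * (LINT x:\<Omega>|lborel. \<bar>\<phi>1 x\<bar> powr p)"
      using eig by (simp add: powr_sq)
    finally show ?thesis using assms(11) unfolding Lint_pow_def by simp
  qed
  have P0: "(LINT x:\<Omega>|lborel. \<bar>max (\<phi>1 x) 0\<bar> powr p) = 1"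
  proof -
    have "(LINT x:\<Omega>|lborel. \<bar>max (\<phi>1 x) 0\<bar> powr p) = (LINT x:\<Omega>|lborel. \<bar>\<phi>1 x\<bar> powr p)"
      unfolding set_lebesgue_integral_def
    proof (rule integral_cong_AE)
      have "\<Omega> \<in> sets lborel" using assms(1) by simp
      then show "(\<lambda>x. indicat_real \<Omega> x *\<^sub>R \<bar>max (\<phi>1 x) 0\<bar> powr p) \<in> borel_measurable lborel"
        "(\<lambda>x. indicat_real \<Omega> x *\<^sub>R \<bar>\<phi>1 x\<bar> powr p) \<in> borel_measurable lborel"
        using meas by measurable
      show "AE x in lborel. indicat_real \<Omega> x *\<^sub>R \<bar>max (\<phi>1 x) 0\<bar> powr p = indicat_real \<Omega> x *\<^sub>R \<bar>\<phi>1 x\<bar> powr p"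
        using assms(10) by eventually_elim (auto simp: indicator_def)
    qed
    thus ?thesis using assms(11) unfolding Lint_pow_def by simp
  qed
  define Q0 where "Q0 = (LINT x:\<Omega>|lborel. \<bar>max (\<phi>1 x) 0\<bar> powr q)"
  have Q0nn: "Q0 \<ge> 0" unfolding Q0_def set_lebesgue_integral_def
    by (intro integral_nonneg_AE) (auto simp: indicator_def)
  have pstar: "crit_exp N s p > 0" unfolding crit_exp_def N_def using assms(7,8) by simp
  define D where "D = (a - l1) / p"
  have Dpos: "D > 0" unfolding D_def l1_def using assms(7,12) by simp
  define K where "K = \<Lambda> * Q0 / q"
  have Knn: "K \<ge> 0" unfolding K_def using Q0nn assms(13,16) by simp
  define t0 where "t0 = ((K + 1) / D) powr (1 / (p - q))"
  have t0pos: "t0 > 0" unfolding t0_def using Knn Dpos by simp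
  show ?thesis
  proof (intro exI[of _ t0] conjI allI impI t0pos)
    fix t lam assume t: "t0 \<le> t" and lam: "0 < lam \<and> lam < \<Lambda>"
    have tpos: "t > 0" using t t0pos by simp
    have pp: "p > 0" using assms(7) by simp
    have "t powr (p - q) \<ge> t0 powr (p - q)"
      using t t0pos assms(14) by (intro powr_mono2) auto
    also have "t0 powr (p - q) = (K + 1) / D"
      unfolding t0_def using Knn Dpos assms(14) by (simp add: powr_powr)
    finally have "t powr (p - q) * D \<ge> K + 1" using Dpos by (simp add: field_simps)
    hence "t powr q * (t powr (p - q) * D) \<ge> t powr q * (K + 1)" using tpos
      by (intro mult_left_mono) auto
    hence key: "t powr p * D \<ge> t powr q * K + t powr q"
      using tpos by (simp add: powr_add[symmetric] algebra_simps)
    have tq: "t powr q > 0" using tpos by simp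
    have lq: "lam / q * Q0 \<le> K" unfolding K_def using lam Q0nn assms(13)
      by (simp add: divide_right_mono mult_right_mono)
    have R: "(LINT x:\<Omega>|lborel. max (t * \<phi>1 x) 0 powr crit_exp N s p) \<ge> 0"
      unfolding set_lebesgue_integral_def by (intro integral_nonneg_AE) (auto simp: indicator_def)
    have "I_plus s p q a b lam \<Omega> (\<lambda>x. t * \<phi>1 x) \<le>
          t powr p * l1 / p + lam / q * (t powr q * Q0) - a / p * (t powr p * 1)"
      unfolding I_plus_def gag_scale[OF meas tpos pp] using assms(7)
      apply (simp only: set_scale[OF tpos] X0 P0 Q0_def[symmetric] N_def[symmetric])
      using R pstar assms(15) by (simp add: mult_nonneg_nonneg)
    also have "\<dots> = t powr q * (lam / q * Q0) - t powr p * D"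
      unfolding D_def using assms(7) by (simp add: field_simps)
    also have "\<dots> \<le> t powr q * K - t powr p * D"
      using mult_left_mono[OF lq, of "t powr q"] tq by simp
    also have "\<dots> < 0" using key tq by linarith
    finally show "I_plus s p q a b lam \<Omega> (\<lambda>x. t * \<phi>1 x) < 0" .
  qed
qed

end
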